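(* For every sufficiently small $\eta>0$ there exists $\nu_0>0$ such that for every $\nu\in(0,\nu_0]$ there exists $\alpha_0>0$ such that for every $\alpha\in(0,\alpha_0]$ there exists $n_0$ such that for all $n\ge n_0$: if $G$ is an $(\alpha,\eta,\nu)$-superextremal biclique on $n$ vertices with partition $V(G)=A\uplus B$ and $M$ is a matching in $G[B]$ with exactly $|B|-|A|$ edges, then $G$ has a Hamilton cycle containing all edges of $M$.
   Context: $d(v,X)$ is the number of neighbours of $v$ in $X$. A graph $G$ on $n$ vertices is an $(\alpha,\varepsilon,\nu)$-superextremal biclique if there is a partition $V(G)=A\uplus B$ with: (B1) $0\le |B|-|A|\le\alpha n$; (B2) $d(a,B)\ge(1/2-\varepsilon)n$ for all but at most $\alpha n$ vertices $a\in A$; (B3) $d(a,B)\ge\nu n$ for all $a\in A$; (B4) $d(b,A)\ge(1/2-\varepsilon)n$ for all but at most $\alpha n$ vertices $b\in B$; (B5) $d(b,A)\ge(1/4-\varepsilon)n$ for all $b\in B$; (B6) if $|A|\ne\lfloor n/2\rfloor$, then $d(b,B)\le 2\nu n$ for all $b\in B$. (Here it is applied with $\varepsilon=\eta$.) *)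

theory Defs
  imports Complex_Main "HOL-Library.Disjoint_Sets"
begin

definition simple_graph :: "'a set \<Rightarrow> ('a \<Rightarrow> 'a \<Rightarrow> bool) \<Rightarrow> bool" where
  "simple_graph V E \<longleftrightarrow> finite V \<and> (\<forall>u v. E u v \<longrightarrow> E v u) \<and> (\<forall>v. \<not> E v v)
     \<and> (\<forall>u v. E u v \<longrightarrow> u \<in> V \<and> v \<in> V)"

definition deg_in :: "('a \<Rightarrow> 'a \<Rightarrow> bool) \<Rightarrow> 'a \<Rightarrow> 'a set \<Rightarrow> nat" where
  "deg_in E v X = card {u \<in> X. E v u}"

definition superextremal_biclique ::
  "real \<Rightarrow> real \<Rightarrow> real \<Rightarrow> 'a set \<Rightarrow> ('a \<Rightarrow> 'a \<Rightarrow> bool) \<Rightarrow> 'a set \<Rightarrow> 'a set \<Rightarrow> bool" where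
  "superextremal_biclique \<alpha> \<epsilon> \<nu> V E A B \<longleftrightarrow>
     (let n = real (card V) in
       A \<union> B = V \<and> A \<inter> B = {} \<and>
       card A \<le> card B \<and> real (card B) - real (card A) \<le> \<alpha> * n \<and>
       real (card {a \<in> A. real (deg_in E a B) < (1/2 - \<epsilon>) * n}) \<le> \<alpha> * n \<and>
       (\<forall>a\<in>A. real (deg_in E a B) \<ge> \<nu> * n) \<and>
       real (card {b \<in> B. real (deg_in E b A) < (1/2 - \<epsilon>) * n}) \<le> \<alpha> * n \<and>
       (\<forall>b\<in>B. real (deg_in E b A) \<ge> (1/4 - \<epsilon>) * n) \<and>
       (card A \<noteq> card V div 2 \<longrightarrow> (\<forall>b\<in>B. real (deg_in E b B) \<le> 2 * \<nu> * n)))"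

definition matching_in :: "('a \<Rightarrow> 'a \<Rightarrow> bool) \<Rightarrow> 'a set \<Rightarrow> 'a set set \<Rightarrow> bool" where
  "matching_in E X M \<longleftrightarrow>
     (\<forall>e\<in>M. \<exists>u v. e = {u, v} \<and> u \<in> X \<and> v \<in> X \<and> E u v) \<and> disjoint M"

definition hamilton_cycle :: "'a set \<Rightarrow> ('a \<Rightarrow> 'a \<Rightarrow> bool) \<Rightarrow> 'a list \<Rightarrow> bool" where
  "hamilton_cycle V E vs \<longleftrightarrow> distinct vs \<and> set vs = V \<and> length vs \<ge> 3 \<and>
     (\<forall>i < length vs. E (vs ! i) (vs ! ((i + 1) mod length vs)))"

definition cycle_edges :: "'a list \<Rightarrow> 'a set set" where
  "cycle_edges vs = {{vs ! i, vs ! ((i + 1) mod length vs)} | i. i < length vs}"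

end

theory Submission
  imports Defs
begin


definition bad :: "('a\<Rightarrow>'a\<Rightarrow>bool) \<Rightarrow> 'a list list \<Rightarrow> nat set" where
 "bad E us = {i. i < length us \<and> \<not> E (last (us!i)) (hd (us!(Suc i mod length us)))}"

definition alt :: "'a set \<Rightarrow> 'a set \<Rightarrow> 'a list list \<Rightarrow> bool" where
 "alt X Y us \<longleftrightarrow> (\<forall>i<length us. hd (us!i) \<in> (if even i then X else Y) \<and> last (us!i) \<in> (if even i then X else Y))"

lemma succ_concat:
  assumes "\<forall>U\<in>set us. U \<noteq> [] \<and> successively E U"
    and "\<forall>i. Suc i < length us \<longrightarrow> E (last (us!i)) (hd (us!Suc i))"
  shows "successively E (concat us)"
  using assms
proof (induction us)
  case Nil then show ?case by simp
next
  case (Cons U us)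
  have IH: "successively E (concat us)"
  proof (rule Cons.IH)
    show "\<forall>U\<in>set us. U \<noteq> [] \<and> successively E U" using Cons.prems by simp
    show "\<forall>i. Suc i < length us \<longrightarrow> E (last (us!i)) (hd (us!Suc i))"
    proof (intro allI impI)
      fix i assume "Suc i < length us"
      then show "E (last (us!i)) (hd (us!Suc i))" using Cons.prems(2)[rule_format, of "Suc i"] by simp
    qed
  qed
  show ?case
  proof (cases us)
    case Nil then show ?thesis using Cons.prems by simp
  next
    case (Cons V vs)
    have "hd (concat us) = hd V" using Cons \<open>\<forall>U\<in>set (U # us). U \<noteq> [] \<and> successively E U\<close> by simp
    moreover have "E (last U) (hd V)" using Cons.prems(2)[rule_format, of 0] Cons by simp
    ultimately show ?thesis using IH \<open>\<forall>U\<in>set (U # us). U \<noteq> [] \<and> successively E U\<close> Cons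
      by (simp add: successively_append_iff)
  qed
qed

lemma bad_rotate:
  shows "bad E (rotate n us) = {j. j < length us \<and> (n + j) mod length us \<in> bad E us}"
proof -
  have pw: "(\<not> E (last (rotate n us ! j)) (hd (rotate n us ! (Suc j mod length us)))) =
          (\<not> E (last (us ! ((n + j) mod length us))) (hd (us ! (Suc ((n + j) mod length us) mod length us))))"
    if j: "j < length us" for j
  proof -
    have 1: "rotate n us ! j = us ! ((n+j) mod length us)" using j by (simp add: nth_rotate)
    have 2: "rotate n us ! (Suc j mod length us) = us ! ((n + Suc j mod length us) mod length us)"
      using j by (intro nth_rotate) (metis gr_implies_not_zero mod_less_divisor not_gr_zero)
    have 3: "(n + Suc j mod length us) mod length us = Suc ((n + j) mod length us) mod length us"
      by (metis add_Suc_right mod_Suc_eq mod_add_right_eq)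
    show ?thesis using 1 2 3 by simp
  qed
  show ?thesis unfolding bad_def using pw
    by auto (metis gr_implies_not_zero mod_less_divisor not_gr_zero)
qed

lemma concat_disj:
  assumes "distinct (concat us)" "i < j" "j < length us"
  shows "set (us!i) \<inter> set (us!j) = {}"
  using assms
proof (induction us arbitrary: i j)
  case Nil then show ?case by simp
next
  case (Cons U us)
  obtain j' where j': "j = Suc j'" using Cons.prems(2) by (cases j) auto
  show ?case
  proof (cases i)
    case 0
    have "us!j' \<in> set us" using j' Cons.prems(3) by simp
    then have "set (us!j') \<subseteq> set (concat us)" by auto
    then show ?thesis using 0 j' Cons.prems(1) by auto
  next
    case (Suc i')
    then show ?thesis using Cons.IH[of i' j'] Cons.prems j' by simp
  qed
qed

lemma concat_disj':
  assumes "distinct (concat us)" "i < length us" "j < length us" "i \<noteq> j"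
    "x \<in> set (us!i)" "x \<in> set (us!j)"
  shows False
proof (cases "i < j")
  case True then show ?thesis using concat_disj[OF assms(1) True assms(3)] assms by blast
next
  case False
  then have "j < i" using assms(4) by simp
  then show ?thesis using concat_disj[OF assms(1) _ assms(2)] assms by blast
qed

lemma card_evens: "card {q. q < 2*N - 1 \<and> even q} = N"
proof -
  have "{q. q < 2*N - 1 \<and> even q} = (\<lambda>i. 2*i) ` {..<N}"
  proof (intro set_eqI iffI)
    fix q assume "q \<in> {q. q < 2*N - 1 \<and> even q}"
    then obtain i where "q = 2*i" "2*i < 2*N - 1" by (auto elim: evenE)
    then show "q \<in> (\<lambda>i. 2*i) ` {..<N}" by auto
  next
    fix q assume "q \<in> (\<lambda>i. 2*i) ` {..<N}"
    then show "q \<in> {q. q < 2*N - 1 \<and> even q}" by auto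
  qed
  moreover have "inj_on (\<lambda>i. 2*i) {..<N}" by (auto simp: inj_on_def)
  ultimately show ?thesis by (simp add: card_image)
qed

lemma step:
  fixes us :: "'a list list"
  assumes sym: "\<forall>u v. E u v \<longrightarrow> E v u"
    and len: "length us = 2*N"
    and dist: "distinct (concat us)"
    and ne: "\<forall>U\<in>set us. U \<noteq> []"
    and alt: "alt X Y us"
    and finX: "finite X" and finY: "finite Y"
    and degX: "\<forall>x\<in>X. real (card {y\<in>Y. \<not> E x y}) \<le> D"
    and degY: "\<forall>y\<in>Y. real (card {x\<in>X. \<not> E y x}) \<le> D"
    and ND: "real N > 2*D"
    and bl: "2*N - 1 \<in> bad E us"
  shows "\<exists>us'. length us' = 2*N \<and> set us' \<subseteq> set us \<union> rev ` set us \<and> alt X Y us'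
     \<and> distinct (concat us') \<and> set (concat us') = set (concat us) \<and> card (bad E us') < card (bad E us)"
proof -
  define m where "m = 2*N"
  have N0: "N > 0" using bl len unfolding bad_def by auto
  have m1: "m - 1 < m" "odd (m - 1)" "Suc (m - 1) mod m = 0" using N0 unfolding m_def by auto
  define t where "t = last (us!(m-1))"
  define s where "s = hd (us!0)"
  have tY: "t \<in> Y" using alt m1 len unfolding alt_def t_def m_def by auto
  have sX: "s \<in> X" using alt N0 len unfolding alt_def s_def m_def by (metis even_zero mult_pos_pos zero_less_numeral)
  have nts: "\<not> E t s" using bl m1 len unfolding bad_def t_def s_def m_def by auto
  define Q where "Q = {q. q < m - 1 \<and> even q}"
  have cQ: "card Q = N" unfolding Q_def m_def by (rule card_evens)
  have finQ: "finite Q" unfolding Q_def by auto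
  define F1 where "F1 = {q\<in>Q. \<not> E t (last (us!q))}"
  define F2 where "F2 = {q\<in>Q. \<not> E s (hd (us!(Suc q)))}"
  have injl: "inj_on (\<lambda>q. last (us!q)) Q"
  proof (rule inj_onI)
    fix a b assume a: "a \<in> Q" and b: "b \<in> Q" and eq: "last (us!a) = last (us!b)"
    have al: "a < length us" "b < length us" using a b len m1 unfolding Q_def m_def by auto
    have "last (us!a) \<in> set (us!a)" "last (us!b) \<in> set (us!b)" using al ne by (auto intro!: last_in_set)
    then show "a = b" using concat_disj'[OF dist al] eq by metis
  qed
  have injh: "inj_on (\<lambda>q. hd (us!(Suc q))) Q"
  proof (rule inj_onI)
    fix a b assume a: "a \<in> Q" and b: "b \<in> Q" and eq: "hd (us!(Suc a)) = hd (us!(Suc b))"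
    have al: "Suc a < length us" "Suc b < length us" using a b len m1 unfolding Q_def m_def by auto
    have "hd (us!Suc a) \<in> set (us!Suc a)" "hd (us!Suc b) \<in> set (us!Suc b)" using al ne by (auto intro!: hd_in_set)
    then show "a = b" using concat_disj'[OF dist al] eq by (metis Suc_inject)
  qed
  have "card F1 = card ((\<lambda>q. last (us!q)) ` F1)"
    using injl by (intro card_image[symmetric]) (auto simp: F1_def intro: inj_on_subset)
  also have "\<dots> \<le> card {x\<in>X. \<not> E t x}"
  proof (rule card_mono)
    show "finite {x\<in>X. \<not> E t x}" using finX by simp
    show "(\<lambda>q. last (us!q)) ` F1 \<subseteq> {x\<in>X. \<not> E t x}"
    proof
      fix x assume "x \<in> (\<lambda>q. last (us!q)) ` F1"
      then obtain q where q: "q \<in> Q" "\<not> E t (last (us!q))" "x = last (us!q)" unfolding F1_def by auto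
      have "q < length us" "even q" using q len m1 unfolding Q_def m_def by auto
      then have "last (us!q) \<in> X" using alt unfolding alt_def by auto
      then show "x \<in> {x\<in>X. \<not> E t x}" using q by auto
    qed
  qed
  finally have cF1: "real (card F1) \<le> D" using degY tY by (meson le_trans of_nat_le_iff order_trans)
  have "card F2 = card ((\<lambda>q. hd (us!(Suc q))) ` F2)"
    using injh by (intro card_image[symmetric]) (auto simp: F2_def intro: inj_on_subset)
  also have "\<dots> \<le> card {y\<in>Y. \<not> E s y}"
  proof (rule card_mono)
    show "finite {y\<in>Y. \<not> E s y}" using finY by simp
    show "(\<lambda>q. hd (us!(Suc q))) ` F2 \<subseteq> {y\<in>Y. \<not> E s y}"
    proof
      fix x assume "x \<in> (\<lambda>q. hd (us!(Suc q))) ` F2"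
      then obtain q where q: "q \<in> Q" "\<not> E s (hd (us!(Suc q)))" "x = hd (us!(Suc q))" unfolding F2_def by auto
      have "Suc q < length us" "odd (Suc q)" using q len m1 unfolding Q_def m_def by auto
      then have "hd (us!(Suc q)) \<in> Y" using alt unfolding alt_def by auto
      then show "x \<in> {y\<in>Y. \<not> E s y}" using q by auto
    qed
  qed
  finally have cF2: "real (card F2) \<le> D" using degX sX by (meson le_trans of_nat_le_iff order_trans)
  have finF: "finite F1" "finite F2" using finQ unfolding F1_def F2_def by auto
  have "card Q \<le> card ((F1 \<union> F2) \<union> (Q - (F1 \<union> F2)))"
    using finQ finF by (intro card_mono) auto
  also have "\<dots> \<le> card (F1 \<union> F2) + card (Q - (F1 \<union> F2))" by (rule card_Un_le)
  finally have "card Q \<le> card (F1 \<union> F2) + card (Q - (F1 \<union> F2))" .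
  moreover have "card (F1 \<union> F2) \<le> card F1 + card F2" by (rule card_Un_le)
  ultimately have "real N \<le> real (card F1) + real (card F2) + real (card (Q - (F1 \<union> F2)))"
    using cQ by linarith
  then have "card (Q - (F1 \<union> F2)) > 0" using cF1 cF2 ND by linarith
  then obtain q where q: "q \<in> Q" "q \<notin> F1" "q \<notin> F2" by (metis Diff_iff UnCI card_gt_0_iff ex_in_conv)
  have qm: "q < m - 1" "even q" using q unfolding Q_def by auto
  have Et: "E t (last (us!q))" and Es: "E s (hd (us!(Suc q)))" using q unfolding F1_def F2_def by auto
  define us' where "us' = map rev (rev (take (Suc q) us)) @ drop (Suc q) us"
  have lus: "length us = m" using len m_def by simp
  have len': "length us' = m" unfolding us'_def using qm lus by simp
  have nth1: "us'!i = rev (us!(q - i))" if "i \<le> q" for i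
    using that qm lus unfolding us'_def by (simp add: nth_append rev_nth)
  have nth2: "us'!i = us!i" if "q < i" "i < m" for i
    using that qm lus unfolding us'_def by (simp add: nth_append)
  have setus': "set us' \<subseteq> set us \<union> rev ` set us"
    unfolding us'_def by (auto dest: in_set_takeD in_set_dropD)
  have cc: "concat us' = rev (concat (take (Suc q) us)) @ concat (drop (Suc q) us)"
    unfolding us'_def by (simp add: rev_concat rev_map)
  have dist': "distinct (concat us')"
    using dist unfolding cc by (metis append_take_drop_id concat_append distinct_append distinct_rev set_rev)
  have set': "set (concat us') = set (concat us)"
    unfolding cc by (metis append_take_drop_id concat_append set_append set_rev)
  have neq: "us!i \<noteq> []" if "i < m" for i using ne that lus by auto
  have alt': "alt X Y us'"
    unfolding alt_def
  proof (intro allI impI)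
    fix i assume i: "i < length us'"
    show "hd (us'!i) \<in> (if even i then X else Y) \<and> last (us'!i) \<in> (if even i then X else Y)"
    proof (cases "i \<le> q")
      case True
      have e: "even (q - i) = even i" using True qm(2) by (auto simp: even_diff_nat)
      have "q - i < length us" using True qm lus by simp
      then have "hd (us!(q-i)) \<in> (if even (q-i) then X else Y) \<and> last (us!(q-i)) \<in> (if even (q-i) then X else Y)"
        using alt unfolding alt_def by blast
      then show ?thesis using nth1[OF True] e neq[of "q-i"] qm lus True
        by (simp add: hd_rev last_rev)
    next
      case False
      then show ?thesis using nth2[of i] i len' alt lus unfolding alt_def by auto
    qed
  qed
  define f where "f i = (if i < q then q - 1 - i else i)" for i
  define S where "S = bad E us \<inter> ({..<q} \<union> {q<..<m-1})"
  have sub: "bad E us' \<subseteq> f ` S"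
  proof
    fix j assume j: "j \<in> bad E us'"
    then have jm: "j < m" and nb: "\<not> E (last (us'!j)) (hd (us'!(Suc j mod m)))"
      unfolding bad_def using len' by auto
    show "j \<in> f ` S"
    proof (cases "j < q")
      case True
      have a1: "us'!j = rev (us!(q-j))" using nth1 True by simp
      have a2: "Suc j mod m = Suc j" using True qm by simp
      have a3: "us'!(Suc j) = rev (us!(q - Suc j))" using nth1 True by simp
      have "\<not> E (hd (us!(q-j))) (last (us!(q - Suc j)))"
        using nb a1 a2 a3 neq[of "q-j"] neq[of "q - Suc j"] qm by (simp add: hd_rev last_rev)
      then have "\<not> E (last (us!(q - Suc j))) (hd (us!(q-j)))" using sym by blast
      moreover have "Suc (q - 1 - j) mod m = q - j" using True qm by simp
      moreover have "q - 1 - j = q - Suc j" by simp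
      ultimately have "q - 1 - j \<in> bad E us" unfolding bad_def using lus True qm by auto
      then have "q - 1 - j \<in> S" unfolding S_def using True by auto
      moreover have "f (q - 1 - j) = j" unfolding f_def using True by auto
      ultimately show ?thesis by (metis image_eqI)
    next
      case False
      show ?thesis
      proof (cases "j = q")
        case True
        have "Suc j mod m = Suc q" using True qm by simp
        moreover have "us'!(Suc q) = us!(Suc q)" using nth2 qm by simp
        moreover have "us'!q = rev (us!0)" using nth1 by simp
        ultimately have "\<not> E s (hd (us!(Suc q)))" using nb True neq[of 0] qm unfolding s_def
          by (simp add: last_rev)
        then show ?thesis using Es by simp
      next
        case False2: False
        show ?thesis
        proof (cases "j = m - 1")
          case True
          have "Suc j mod m = 0" using True m1 by simp
          moreover have "us'!0 = rev (us!q)" using nth1[of 0] by simp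
          moreover have "us'!j = us!(m-1)" using nth2[of j] True jm False False2 by simp
          ultimately have "\<not> E t (last (us!q))" using nb neq[of q] qm unfolding t_def
            by (simp add: hd_rev)
          then show ?thesis using Et by simp
        next
          case False3: False
          have b: "q < j" "j < m - 1" using False False2 False3 jm by auto
          have "us'!j = us!j" "us'!(Suc j) = us!(Suc j)" using nth2 b by auto
          moreover have "Suc j mod m = Suc j" using b by simp
          ultimately have "j \<in> bad E us" using nb jm lus unfolding bad_def by auto
          then have "j \<in> S" unfolding S_def using b by auto
          moreover have "f j = j" unfolding f_def using b by simp
          ultimately show ?thesis by (metis image_eqI)
        qed
      qed
    qed
  qed
  have finB: "finite (bad E us)" unfolding bad_def by auto
  have "card (bad E us') \<le> card (f ` S)" using sub by (intro card_mono) (auto simp: S_def finB)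
  also have "\<dots> \<le> card S" by (rule card_image_le) (auto simp: S_def finB)
  also have "\<dots> \<le> card (bad E us - {m-1})" using qm by (intro card_mono) (auto simp: S_def finB)
  also have "\<dots> < card (bad E us)" using bl finB unfolding m_def
    by (metis card_Diff1_less)
  finally show ?thesis using len' alt' dist' set' setus' unfolding m_def by blast
qed

lemma modinj: assumes "(n + a) mod (m::nat) = (n + b) mod m" "a < m" "b < m" shows "a = b"
proof -
  have key: "a = b" if "(n + a) mod (m::nat) = (n + b) mod m" "a < m" "b < m" "a \<le> b" for a b :: nat
  proof -
    have "m dvd (n + b) - (n + a)" using that by (subst mod_eq_dvd_iff_nat[symmetric]) auto
    then have "m dvd b - a" by simp
    moreover have "b - a < m" using that by simp
    ultimately have "b - a = 0" by (metis dvd_imp_le not_gr0 not_le)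
    then show "a = b" using that by simp
  qed
  from key[of a b] key[of b a] assms show ?thesis by (metis nat_le_linear)
qed

lemma card_bad_rotate:
  assumes "length us > 0"
  shows "card (bad E (rotate n us)) \<le> card (bad E us)"
proof -
  define m where "m = length us"
  define g where "g j = (n + j) mod m" for j
  have eq: "bad E (rotate n us) = {j. j < m \<and> g j \<in> bad E us}"
    unfolding bad_rotate g_def m_def ..
  have "inj_on g (bad E (rotate n us))"
  proof (rule inj_onI)
    fix a b assume "a \<in> bad E (rotate n us)" "b \<in> bad E (rotate n us)" "g a = g b"
    then have "(n + a) mod m = (n + b) mod m" "a < m" "b < m" unfolding eq g_def by auto
    then show "a = b" by (rule modinj)
  qed
  moreover have "g ` bad E (rotate n us) \<subseteq> bad E us" using eq by auto
  moreover have "finite (bad E us)" unfolding bad_def by auto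
  ultimately show ?thesis by (intro card_inj_on_le)
qed

lemma alt_rotate:
  assumes "alt X Y us" "even (length us)"
  shows "(even n \<longrightarrow> alt X Y (rotate n us)) \<and> (odd n \<longrightarrow> alt Y X (rotate n us))"
proof -
  have *: "hd (rotate n us ! j) \<in> (if even (n + j) then X else Y) \<and> last (rotate n us ! j) \<in> (if even (n + j) then X else Y)"
    if j: "j < length us" for j
  proof -
    have r: "rotate n us ! j = us ! ((n + j) mod length us)" using j by (simp add: nth_rotate)
    have l: "(n + j) mod length us < length us" using j by (metis gr_implies_not_zero mod_less_divisor not_gr_zero)
    have p: "even ((n + j) mod length us) = even (n + j)" using assms(2) by (simp add: dvd_mod_iff)
    show ?thesis using assms(1)[unfolded alt_def, rule_format, OF l] unfolding r p by simp
  qed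
  have A: "alt X Y (rotate n us)" if "even n" unfolding alt_def
  proof (intro allI impI)
    fix i assume "i < length (rotate n us)"
    then show "hd (rotate n us ! i) \<in> (if even i then X else Y) \<and> last (rotate n us ! i) \<in> (if even i then X else Y)"
      using *[of i] that by (cases "even i") auto
  qed
  have B: "alt Y X (rotate n us)" if "odd n" unfolding alt_def
  proof (intro allI impI)
    fix i assume "i < length (rotate n us)"
    then show "hd (rotate n us ! i) \<in> (if even i then Y else X) \<and> last (rotate n us ! i) \<in> (if even i then Y else X)"
      using *[of i] that by (cases "even i") auto
  qed
  show ?thesis using A B by blast
qed

lemma twoopt:
  fixes us0 :: "'a list list"
  assumes sym: "\<forall>u v. E u v \<longrightarrow> E v u"
    and len: "length us0 = 2*N" and N0: "N > 0"
    and dist: "distinct (concat us0)"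
    and ne: "\<forall>U\<in>set us0. U \<noteq> []"
    and alt: "alt X Y us0"
    and finX: "finite X" and finY: "finite Y"
    and degX: "\<forall>x\<in>X. real (card {y\<in>Y. \<not> E x y}) \<le> D"
    and degY: "\<forall>y\<in>Y. real (card {x\<in>X. \<not> E y x}) \<le> D"
    and ND: "real N > 2*D"
  shows "\<exists>us. length us = 2*N \<and> set us \<subseteq> set us0 \<union> rev ` set us0 \<and> distinct (concat us)
     \<and> set (concat us) = set (concat us0) \<and> bad E us = {}"
proof -
  define R where "R = set us0 \<union> rev ` set us0"
  have Rrev: "rev U \<in> R" if "U \<in> R" for U using that unfolding R_def by auto
  have Rne: "U \<noteq> []" if "U \<in> R" for U using that ne unfolding R_def by auto
  define P where "P us \<longleftrightarrow> length us = 2*N \<and> set us \<subseteq> R \<and> distinct (concat us)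
     \<and> set (concat us) = set (concat us0) \<and> (alt X Y us \<or> alt Y X us)" for us
  have "P us0" unfolding P_def R_def using len dist alt by auto
  then obtain us where Pus: "P us" and min: "\<And>vs. P vs \<Longrightarrow> card (bad E us) \<le> card (bad E vs)"
    using ex_has_least_nat[of P us0 "\<lambda>us. card (bad E us)"] by blast
  have "bad E us = {}"
  proof (rule ccontr)
    assume "bad E us \<noteq> {}"
    then obtain i where i: "i \<in> bad E us" by auto
    have lus: "length us = 2*N" using Pus P_def by simp
    have il: "i < 2*N" using i lus unfolding bad_def by auto
    define us1 where "us1 = rotate (Suc i) us"
    have l1: "length us1 = 2*N" using lus us1_def by simp
    have "(Suc i + (2*N - 1)) mod (2*N) = i"
    proof -
      have "Suc i + (2*N - 1) = i + 2*N" using N0 by simp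
      then show ?thesis using il by simp
    qed
    then have b1: "2*N - 1 \<in> bad E us1" using i lus N0 unfolding us1_def bad_rotate by auto
    have c1: "card (bad E us1) \<le> card (bad E us)" unfolding us1_def using lus N0 by (intro card_bad_rotate) simp
    have s1: "set us1 \<subseteq> R" using Pus unfolding us1_def P_def by simp
    have ne1: "\<forall>U\<in>set us1. U \<noteq> []" using s1 Rne by auto
    have cc1: "concat us1 = concat (drop (Suc i mod length us) us) @ concat (take (Suc i mod length us) us)"
      unfolding us1_def rotate_drop_take by simp
    define k where "k = Suc i mod length us"
    have split: "concat us = concat (take k us) @ concat (drop k us)"
      by (metis append_take_drop_id concat_append)
    have dus: "distinct (concat us)" and sus: "set (concat us) = set (concat us0)" using Pus unfolding P_def by auto
    have d1: "distinct (concat us1)" using dus unfolding cc1 k_def[symmetric] split distinct_append by blast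
    have st1: "set (concat us1) = set (concat us0)" using sus unfolding cc1 k_def[symmetric] split set_append by blast
    have ev: "even (length us)" using lus by simp
    have a1: "alt X Y us1 \<or> alt Y X us1"
      using Pus alt_rotate[OF _ ev, of X Y "Suc i"] alt_rotate[OF _ ev, of Y X "Suc i"]
      unfolding P_def us1_def by blast
    have "\<exists>us'. length us' = 2*N \<and> set us' \<subseteq> set us1 \<union> rev ` set us1 \<and> (alt X Y us' \<or> alt Y X us')
       \<and> distinct (concat us') \<and> set (concat us') = set (concat us1) \<and> card (bad E us') < card (bad E us1)"
      using a1
    proof
      assume "alt X Y us1"
      from step[OF sym l1 d1 ne1 this finX finY degX degY ND b1] show ?thesis by blast
    next
      assume "alt Y X us1"
      from step[OF sym l1 d1 ne1 this finY finX degY degX ND b1] show ?thesis by blast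
    qed
    then obtain us' where us': "length us' = 2*N" "set us' \<subseteq> set us1 \<union> rev ` set us1" "alt X Y us' \<or> alt Y X us'"
       "distinct (concat us')" "set (concat us') = set (concat us1)" "card (bad E us') < card (bad E us1)"
      by blast
    have "set us' \<subseteq> R" using us'(2) s1 Rrev by auto
    then have "P us'" unfolding P_def using us' st1 by simp
    then have "card (bad E us) \<le> card (bad E us')" by (rule min)
    then show False using us'(6) c1 by simp
  qed
  then show ?thesis using Pus unfolding P_def R_def by blast
qed


lemma hd_concat_ne: "us \<noteq> [] \<Longrightarrow> hd us \<noteq> [] \<Longrightarrow> hd (concat us) = hd (hd us)"
  by (cases us) auto

lemma last_concat_ne: "us \<noteq> [] \<Longrightarrow> last us \<noteq> [] \<Longrightarrow> last (concat us) = last (last us)"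
proof -
  assume a: "us \<noteq> []" "last us \<noteq> []"
  have "us = butlast us @ [last us]" using a by simp
  then have "concat us = concat (butlast us) @ concat [last us]" by (metis concat_append)
  then show ?thesis using a by simp
qed

lemma ham_from_units:
  assumes bad: "bad E us = {}" and une: "us \<noteq> []"
    and units: "\<forall>U\<in>set us. U \<noteq> [] \<and> successively E U"
    and dist: "distinct (concat us)" and st: "set (concat us) = V" and l3: "length (concat us) \<ge> 3"
  shows "hamilton_cycle V E (concat us)"
proof -
  define vs where "vs = concat us"
  define m where "m = length us"
  have m0: "m > 0" using une m_def by simp
  have sc: "successively E vs" unfolding vs_def
  proof (rule succ_concat[OF units], intro allI impI)
    fix i assume i: "Suc i < length us"
    then have "i \<notin> bad E us" using bad by simp
    then show "E (last (us!i)) (hd (us!Suc i))" using i unfolding bad_def by auto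
  qed
  have "m - 1 \<notin> bad E us" using bad by simp
  moreover have "Suc (m - 1) mod m = 0" using m0 by simp
  ultimately have w: "E (last (us!(m-1))) (hd (us!0))" unfolding bad_def using m0 m_def by auto
  have lu: "last us = us!(m-1)" using une m_def by (simp add: last_conv_nth)
  have hu: "hd us = us!0" using une by (simp add: hd_conv_nth)
  have ne1: "last us \<noteq> []" "hd us \<noteq> []" using une units by auto
  have wrap: "E (last vs) (hd vs)"
    using w unfolding vs_def last_concat_ne[OF une ne1(1)] hd_concat_ne[OF une ne1(2)] lu hu .
  define L where "L = length vs"
  have L3: "L \<ge> 3" using l3 unfolding L_def vs_def .
  have "E (vs!i) (vs!((i+1) mod L))" if i: "i < L" for i
  proof (cases "Suc i < L")
    case True
    then show ?thesis using successively_nth[OF sc, of i] L_def by simp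
  next
    case False
    then have "i = L - 1" using i by simp
    moreover have "vs ! (L - 1) = last vs" "vs ! 0 = hd vs" using L3 unfolding L_def
      by (metis last_conv_nth list.size(3) not_numeral_le_zero, metis hd_conv_nth list.size(3) not_numeral_le_zero)
    ultimately show ?thesis using wrap L3 by simp
  qed
  then show ?thesis unfolding hamilton_cycle_def vs_def L_def using dist st L3 unfolding vs_def L_def by blast
qed

lemma edge_in_cycle:
  assumes "vs = xs @ [a,b] @ ys"
  shows "{a,b} \<in> cycle_edges vs"
proof -
  define i where "i = length xs"
  have "i < length vs" "vs!i = a" "vs!((i+1) mod length vs) = b"
    using assms unfolding i_def by (auto simp: nth_append)
  then show ?thesis unfolding cycle_edges_def by blast
qed

lemma unit_infix:
  assumes "U \<in> set us" "U = p @ [a,b] @ q"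
  shows "{a,b} \<in> cycle_edges (concat us)"
proof -
  obtain us1 us2 where "us = us1 @ U # us2" using assms(1) by (meson split_list)
  then have "concat us = (concat us1 @ p) @ [a,b] @ (q @ concat us2)" using assms(2) by simp
  then show ?thesis by (rule edge_in_cycle)
qed

lemma choose_pairs:
  assumes "finite I"
  shows "(\<forall>i\<in>I. finite (S i) \<and> finite (T i) \<and> card (S i) \<ge> 2 * card I \<and> card (T i) \<ge> 2 * card I) \<Longrightarrow>
    \<exists>f g. \<forall>i\<in>I. f i \<in> S i \<and> g i \<in> T i \<and> (\<forall>j\<in>I. f i \<noteq> g j \<and> (i \<noteq> j \<longrightarrow> f i \<noteq> f j \<and> g i \<noteq> g j))"
  using assms
proof (induction I rule: finite_induct)
  case empty then show ?case by simp
next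
  case (insert x F)
  have cF: "card (insert x F) = Suc (card F)" using insert by simp
  have "\<forall>i\<in>F. finite (S i) \<and> finite (T i) \<and> card (S i) \<ge> 2 * card F \<and> card (T i) \<ge> 2 * card F"
    using insert.prems cF by auto
  then obtain f g where fg: "\<forall>i\<in>F. f i \<in> S i \<and> g i \<in> T i \<and> (\<forall>j\<in>F. f i \<noteq> g j \<and> (i \<noteq> j \<longrightarrow> f i \<noteq> f j \<and> g i \<noteq> g j))"
    using insert.IH by blast
  define U where "U = f ` F \<union> g ` F"
  have finU: "finite U" using insert U_def by simp
  have cU: "card U \<le> 2 * card F"
  proof -
    have "card (f ` F \<union> g ` F) \<le> card (f ` F) + card (g ` F)" by (rule card_Un_le)
    moreover have "card (f ` F) \<le> card F" "card (g ` F) \<le> card F" using insert.hyps(1) by (auto intro: card_image_le)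
    ultimately show ?thesis by (simp add: U_def)
  qed
  have Sx: "finite (S x)" "card (S x) \<ge> 2 * card F + 2" and Tx: "finite (T x)" "card (T x) \<ge> 2 * card F + 2"
    using insert.prems cF by auto
  have "card (S x) - card U \<le> card (S x - U)" using finU by (rule diff_card_le_card_Diff)
  then have "card (S x - U) > 0" using Sx cU by linarith
  then obtain a where a: "a \<in> S x" "a \<notin> U" by (metis Diff_iff card_gt_0_iff ex_in_conv)
  have "card (T x) - card (insert a U) \<le> card (T x - insert a U)" using finU by (intro diff_card_le_card_Diff) simp
  moreover have "card (insert a U) \<le> card U + 1" using finU by (simp add: card_insert_if)
  ultimately have "card (T x - insert a U) > 0" using Tx cU by linarith
  then obtain b where b: "b \<in> T x" "b \<notin> insert a U" by (metis Diff_iff card_gt_0_iff ex_in_conv)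
  define f' where "f' = f(x := a)"
  define g' where "g' = g(x := b)"
  have "\<forall>i\<in>insert x F. f' i \<in> S i \<and> g' i \<in> T i \<and> (\<forall>j\<in>insert x F. f' i \<noteq> g' j \<and> (i \<noteq> j \<longrightarrow> f' i \<noteq> f' j \<and> g' i \<noteq> g' j))"
  proof
    fix i assume i: "i \<in> insert x F"
    show "f' i \<in> S i \<and> g' i \<in> T i \<and> (\<forall>j\<in>insert x F. f' i \<noteq> g' j \<and> (i \<noteq> j \<longrightarrow> f' i \<noteq> f' j \<and> g' i \<noteq> g' j))"
    proof (cases "i = x")
      case True
      have "\<forall>j\<in>F. f j \<noteq> a \<and> g j \<noteq> a \<and> f j \<noteq> b \<and> g j \<noteq> b" using a b unfolding U_def by auto
      then show ?thesis using True a b insert.hyps(2) unfolding f'_def g'_def by auto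
    next
      case False
      then have iF: "i \<in> F" using i by simp
      have "f i \<noteq> a" "g i \<noteq> a" "f i \<noteq> b" "g i \<noteq> b" using a b iF unfolding U_def by auto
      then show ?thesis using fg iF False insert.hyps(2) unfolding f'_def g'_def by auto
    qed
  qed
  then show ?case by blast
qed

fun ilv :: "'a list \<Rightarrow> 'a list \<Rightarrow> 'a list" where
  "ilv (x#xs) (y#ys) = x # y # ilv xs ys"
| "ilv _ _ = []"

lemma ilv_length: "length xs = length ys \<Longrightarrow> length (ilv xs ys) = 2 * length xs"
  by (induction xs ys rule: ilv.induct) auto

lemma ilv_set: "length xs = length ys \<Longrightarrow> set (ilv xs ys) = set xs \<union> set ys"
  by (induction xs ys rule: ilv.induct) auto

lemma ilv_nth: "length xs = length ys \<Longrightarrow> i < 2 * length xs \<Longrightarrow>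
   ilv xs ys ! i = (if even i then xs ! (i div 2) else ys ! (i div 2))"
proof (induction xs ys arbitrary: i rule: ilv.induct)
  case (1 x xs y ys)
  show ?case
  proof (cases i)
    case 0 then show ?thesis by simp
  next
    case (Suc i')
    show ?thesis
    proof (cases i')
      case 0 then show ?thesis using Suc by simp
    next
      case (Suc i'')
      have "i'' < 2 * length xs" using 1 Suc \<open>i = Suc i'\<close> by simp
      then show ?thesis using 1 Suc \<open>i = Suc i'\<close> by simp
    qed
  qed
qed auto

lemma ilv_concat_set: "length xs = length ys \<Longrightarrow> set (concat (ilv xs ys)) = set (concat xs) \<union> set (concat ys)"
  by (induction xs ys rule: ilv.induct) auto

lemma ilv_distinct: "length xs = length ys \<Longrightarrow> distinct (concat xs @ concat ys) \<Longrightarrow> distinct (concat (ilv xs ys))"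
proof (induction xs ys rule: ilv.induct)
  case (1 x xs y ys)
  have d: "distinct (concat xs @ concat ys)" using 1(3) by auto
  have IH: "distinct (concat (ilv xs ys))" using 1 d by simp
  show ?case using 1(3) IH ilv_concat_set[of xs ys] 1(2) by auto
qed auto

lemma dist_concat_map:
  assumes "distinct xs" "\<forall>x\<in>set xs. distinct (F x)"
    "\<forall>x\<in>set xs. \<forall>y\<in>set xs. x \<noteq> y \<longrightarrow> set (F x) \<inter> set (F y) = {}"
  shows "distinct (concat (map F xs))"
  using assms
proof (induction xs)
  case (Cons a xs)
  then show ?case by auto
qed simp



lemma card_le_diff: "finite X \<Longrightarrow> finite Y \<Longrightarrow> card X \<le> card (X - Y) + card Y"
proof -
  assume f: "finite X" "finite Y"
  have "card X \<le> card ((X - Y) \<union> Y)" using f by (intro card_mono) auto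
  also have "\<dots> \<le> card (X - Y) + card Y" by (rule card_Un_le)
  finally show ?thesis .
qed

lemma succ_rev: "successively E W \<Longrightarrow> \<forall>u v. E u v \<longrightarrow> E v u \<Longrightarrow> successively E (rev W)"
  unfolding successively_rev by (erule successively_mono) blast

lemma main:
  fixes V :: "nat set" and E A B M and \<eta> \<nu> \<alpha> :: real
  assumes eta: "0 < \<eta>" "\<eta> \<le> 1/100" and nu: "0 < \<nu>" "\<nu> \<le> 1/100" and al: "0 < \<alpha>" "\<alpha> \<le> \<nu>/10"
    and sg: "simple_graph V E" and nV: "card V \<ge> 3" and se: "superextremal_biclique \<alpha> \<eta> \<nu> V E A B"
    and mt: "matching_in E B M" and cM: "card M = card B - card A"
  shows "\<exists>vs. hamilton_cycle V E vs \<and> M \<subseteq> cycle_edges vs"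
proof -
  define n where "n = card V"
  have finV: "finite V" and sym: "\<forall>u v. E u v \<longrightarrow> E v u" and irr: "\<forall>v. \<not> E v v"
    and inV: "\<forall>u v. E u v \<longrightarrow> u \<in> V \<and> v \<in> V"
    using sg unfolding simple_graph_def by auto
  have se': "A \<union> B = V \<and> A \<inter> B = {} \<and>
       card A \<le> card B \<and> real (card B) - real (card A) \<le> \<alpha> * real n \<and>
       real (card {a \<in> A. real (deg_in E a B) < (1/2 - \<eta>) * real n}) \<le> \<alpha> * real n \<and>
       (\<forall>a\<in>A. real (deg_in E a B) \<ge> \<nu> * real n) \<and>
       real (card {b \<in> B. real (deg_in E b A) < (1/2 - \<eta>) * real n}) \<le> \<alpha> * real n \<and>
       (\<forall>b\<in>B. real (deg_in E b A) \<ge> (1/4 - \<eta>) * real n)"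
    using se unfolding superextremal_biclique_def Let_def n_def by blast
  have AB: "A \<union> B = V" and ABd: "A \<inter> B = {}" and cAB: "card A \<le> card B"
    and dAB: "real (card B) - real (card A) \<le> \<alpha> * real n"
    using se' by blast+
  define BA where "BA = {a \<in> A. real (deg_in E a B) < (1/2 - \<eta>) * real n}"
  define BBd where "BBd = {b \<in> B. real (deg_in E b A) < (1/2 - \<eta>) * real n}"
  have cBA: "real (card BA) \<le> \<alpha> * real n" and degA: "\<forall>a\<in>A. real (deg_in E a B) \<ge> \<nu> * real n"
    and cBBd: "real (card BBd) \<le> \<alpha> * real n" and degB: "\<forall>b\<in>B. real (deg_in E b A) \<ge> (1/4 - \<eta>) * real n"
    using se' unfolding BA_def BBd_def by blast+
  have finA: "finite A" and finB: "finite B" using AB finV by auto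
  have nAB: "card A + card B = n" using AB ABd finA finB unfolding n_def by (metis card_Un_disjoint)
  have rn3: "real n \<ge> 3" using nV n_def by simp
  have cMB: "card M + card A = card B" using cM cAB by simp
  have rcM: "real (card M) \<le> \<alpha> * real n" using cMB dAB by linarith
  have mt': "(\<forall>e\<in>M. \<exists>u v. e = {u, v} \<and> u \<in> B \<and> v \<in> B \<and> E u v) \<and> disjoint M"
    using mt unfolding matching_in_def .
  have Me: "\<forall>e\<in>M. \<exists>u v. e = {u, v} \<and> u \<in> B \<and> v \<in> B \<and> E u v" using mt' by (rule conjunct1)
  have Md: "disjoint M" using mt' by (rule conjunct2)
  have MB: "\<forall>e\<in>M. e \<subseteq> B"
  proof
    fix e assume "e \<in> M"
    then obtain u v where "e = {u, v}" "u \<in> B" "v \<in> B" using Me by blast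
    then show "e \<subseteq> B" by simp
  qed
  have finM: "finite M"
  proof (rule finite_subset)
    show "M \<subseteq> Pow B" using MB by auto
    show "finite (Pow B)" using finB by simp
  qed
  have card2: "card e = 2" if eM: "e \<in> M" for e
  proof -
    obtain u v where "e = {u,v}" "E u v" using Me eM by blast
    moreover have "u \<noteq> v" using irr \<open>E u v\<close> by auto
    ultimately show ?thesis by simp
  qed
  define VM where "VM = \<Union>M"
  have VMB: "VM \<subseteq> B" using MB unfolding VM_def by auto
  have cVM: "card VM = 2 * card M"
  proof -
    have "card VM = sum card M" unfolding VM_def
      using Md by (intro card_Union_disjoint) (auto intro: finite_subset[OF _ finB] dest: MB[rule_format])
    also have "\<dots> = sum (\<lambda>_. 2) M" using card2 by (intro sum.cong) auto
    finally show ?thesis by simp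
  qed
  define GA where "GA = A - BA"
  define GB0 where "GB0 = B - BBd - VM"
  define IA where "IA = M \<union> (\<lambda>b. {b}) ` (BBd - VM)"
  define sl where "sl e = sorted_list_of_set e" for e :: "nat set"
  have finBBd: "finite BBd" and finBA: "finite BA" and finVM: "finite VM"
    using finA finB VMB unfolding BBd_def BA_def by (auto intro: finite_subset)
  have finIA: "finite IA" unfolding IA_def using finM finBBd by simp
  have IAB: "\<forall>e\<in>IA. e \<subseteq> B" unfolding IA_def BBd_def using MB by auto
  have slp: "sl e \<noteq> [] \<and> set (sl e) = e \<and> distinct (sl e) \<and> successively E (sl e)" if eI: "e \<in> IA" for e
  proof (cases "e \<in> M")
    case True
    obtain u v where uv: "e = {u,v}" "E u v" using Me True by blast
    show ?thesis
    proof (cases "u < v")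
      case True
      then show ?thesis using uv unfolding sl_def by simp
    next
      case False
      have "u \<noteq> v" using irr uv by auto
      then have "v < u" using False by simp
      moreover have "e = {v,u}" using uv by auto
      ultimately show ?thesis using uv sym unfolding sl_def by simp
    qed
  next
    case False
    then obtain b where "e = {b}" using eI unfolding IA_def by auto
    then show ?thesis unfolding sl_def by simp
  qed
  have slM: "\<exists>x y. sl e = [x,y] \<and> e = {x,y}" if eM: "e \<in> M" for e
  proof -
    obtain u v where uv: "e = {u,v}" "E u v" using Me eM by blast
    have "u \<noteq> v" using irr uv by auto
    then show ?thesis
      by (cases "u < v") (use uv in \<open>auto simp: sl_def insert_commute\<close>)
  qed
  have IAdisj: "e \<inter> e' = {}" if eI: "e \<in> IA" "e' \<in> IA" "e \<noteq> e'" for e e'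
  proof -
    consider "e \<in> M" "e' \<in> M" | "e \<in> M" "e' \<notin> M" | "e \<notin> M" "e' \<in> M" | "e \<notin> M" "e' \<notin> M" by blast
    then show ?thesis
    proof cases
      case 1 then show ?thesis using Md eI unfolding pairwise_def disjnt_def by blast
    next
      case 2 then show ?thesis using eI unfolding IA_def VM_def by auto
    next
      case 3 then show ?thesis using eI unfolding IA_def VM_def by auto
    next
      case 4 then show ?thesis using eI unfolding IA_def by auto
    qed
  qed
  have UIA: "\<Union>IA = VM \<union> (BBd - VM)" unfolding IA_def VM_def by auto
  have cIA: "card IA = card M + card (BBd - VM)"
  proof -
    have "M \<inter> (\<lambda>b. {b}) ` (BBd - VM) = {}" using card2 by fastforce
    moreover have "card ((\<lambda>b. {b}) ` (BBd - VM)) = card (BBd - VM)" by (rule card_image) (auto simp: inj_on_def)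
    ultimately show ?thesis unfolding IA_def using finM finBBd by (simp add: card_Un_disjoint)
  qed
  have rcIA: "real (card IA) \<le> 2 * \<alpha> * real n"
  proof -
    have "card (BBd - VM) \<le> card BBd" using finBBd by (intro card_mono) auto
    then show ?thesis using cIA rcM cBBd by linarith
  qed
  have rn0: "real n > 0" using rn3 by simp
  define SB where "SB a = {b \<in> GB0. E a b}" for a
  have SBc: "\<forall>a\<in>BA. finite (SB a) \<and> finite (SB a) \<and> card (SB a) \<ge> 2 * card BA \<and> card (SB a) \<ge> 2 * card BA"
  proof
    fix a assume a: "a \<in> BA"
    have f: "finite (SB a)" unfolding SB_def GB0_def using finB by simp
    have eq: "SB a = {b\<in>B. E a b} - (BBd \<union> VM)" unfolding SB_def GB0_def by auto
    have "card {b\<in>B. E a b} \<le> card (SB a) + card (BBd \<union> VM)"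
      unfolding eq using finB finBBd finVM by (intro card_le_diff) auto
    moreover have "card (BBd \<union> VM) \<le> card BBd + card VM" by (rule card_Un_le)
    moreover have "real (card {b\<in>B. E a b}) \<ge> \<nu> * real n" using degA a unfolding BA_def deg_in_def by auto
    ultimately have "real (card (SB a)) \<ge> \<nu> * real n - \<alpha> * real n - 2 * \<alpha> * real n"
      using cBBd cVM rcM by linarith
    moreover have "\<nu> * real n \<ge> 10 * \<alpha> * real n" using al rn0 by (intro mult_right_mono) auto
    ultimately have "real (card (SB a)) \<ge> 2 * real (card BA)" using cBA rn0 by linarith
    then show "finite (SB a) \<and> finite (SB a) \<and> card (SB a) \<ge> 2 * card BA \<and> card (SB a) \<ge> 2 * card BA"
      using f by linarith
  qed
  obtain fB gB where fgB: "\<forall>i\<in>BA. fB i \<in> SB i \<and> gB i \<in> SB i \<and> (\<forall>j\<in>BA. fB i \<noteq> gB j \<and> (i \<noteq> j \<longrightarrow> fB i \<noteq> fB j \<and> gB i \<noteq> gB j))"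
    using choose_pairs[OF finBA SBc] by blast
  define SA where "SA e = {a \<in> GA. E (hd (sl e)) a}" for e
  define TA where "TA e = {a \<in> GA. E (last (sl e)) a}" for e
  have gen: "card {a \<in> GA. E x a} \<ge> 2 * card IA \<and> finite {a \<in> GA. E x a}" if x: "x \<in> B" for x
  proof -
    have eq: "{a \<in> GA. E x a} = {a\<in>A. E x a} - BA" unfolding GA_def by auto
    have "card {a\<in>A. E x a} \<le> card {a \<in> GA. E x a} + card BA"
      unfolding eq using finA finBA by (intro card_le_diff) auto
    moreover have "real (card {a\<in>A. E x a}) \<ge> (1/4 - \<eta>) * real n" using degB x unfolding deg_in_def by auto
    ultimately have "real (card {a \<in> GA. E x a}) \<ge> (1/4 - \<eta>) * real n - \<alpha> * real n" using cBA by linarith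
    moreover have "(1/4 - \<eta>) * real n - \<alpha> * real n \<ge> 4 * \<alpha> * real n"
    proof -
      have "(1/4 - \<eta> - 5 * \<alpha>) * real n \<ge> 0" using eta al nu rn0 by (intro mult_nonneg_nonneg) auto
      then show ?thesis by (simp add: algebra_simps)
    qed
    ultimately have "real (card {a \<in> GA. E x a}) \<ge> 2 * real (card IA)" using rcIA by linarith
    then show ?thesis using finA unfolding GA_def by simp
  qed
  have SAc: "\<forall>e\<in>IA. finite (SA e) \<and> finite (TA e) \<and> card (SA e) \<ge> 2 * card IA \<and> card (TA e) \<ge> 2 * card IA"
  proof
    fix e assume e: "e \<in> IA"
    have "hd (sl e) \<in> e" "last (sl e) \<in> e" using slp[OF e] by (metis hd_in_set last_in_set)+
    then have "hd (sl e) \<in> B" "last (sl e) \<in> B" using IAB e by auto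
    then show "finite (SA e) \<and> finite (TA e) \<and> card (SA e) \<ge> 2 * card IA \<and> card (TA e) \<ge> 2 * card IA"
      using gen unfolding SA_def TA_def by blast
  qed
  obtain fA gA where fgA: "\<forall>i\<in>IA. fA i \<in> SA i \<and> gA i \<in> TA i \<and> (\<forall>j\<in>IA. fA i \<noteq> gA j \<and> (i \<noteq> j \<longrightarrow> fA i \<noteq> fA j \<and> gA i \<noteq> gA j))"
    using choose_pairs[OF finIA SAc] by blast
  define UsedA where "UsedA = fA ` IA \<union> gA ` IA"
  define UsedB where "UsedB = fB ` BA \<union> gB ` BA"
  have UA: "UsedA \<subseteq> GA" using fgA unfolding UsedA_def SA_def TA_def by auto
  have UB: "UsedB \<subseteq> GB0" using fgB unfolding UsedB_def SB_def by auto
  have cUA: "card UsedA = 2 * card IA"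
  proof -
    have "card (fA ` IA) = card IA" using fgA by (intro card_image) (auto simp: inj_on_def)
    moreover have "card (gA ` IA) = card IA" using fgA by (intro card_image) (auto simp: inj_on_def)
    moreover have "fA ` IA \<inter> gA ` IA = {}" using fgA by auto
    ultimately show ?thesis unfolding UsedA_def using finIA by (simp add: card_Un_disjoint)
  qed
  have cUB: "card UsedB = 2 * card BA"
  proof -
    have "card (fB ` BA) = card BA" using fgB by (intro card_image) (auto simp: inj_on_def)
    moreover have "card (gB ` BA) = card BA" using fgB by (intro card_image) (auto simp: inj_on_def)
    moreover have "fB ` BA \<inter> gB ` BA = {}" using fgB by auto
    ultimately show ?thesis unfolding UsedB_def using finBA by (simp add: card_Un_disjoint)
  qed
  have finGA: "finite GA" and finGB0: "finite GB0" using finA finB unfolding GA_def GB0_def by auto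
  have fUA: "finite UsedA" and fUB: "finite UsedB" using UA UB finGA finGB0 by (auto intro: finite_subset)
  have cA: "card A = card BA + card UsedA + card (GA - UsedA)"
  proof -
    have "A = BA \<union> UsedA \<union> (GA - UsedA)" using UA unfolding GA_def BA_def by auto
    moreover have "card (BA \<union> UsedA \<union> (GA - UsedA)) = card BA + card UsedA + card (GA - UsedA)"
    proof -
      have d1: "(BA \<union> UsedA) \<inter> (GA - UsedA) = {}" unfolding GA_def by auto
      have d2: "BA \<inter> UsedA = {}" using UA unfolding GA_def by auto
      show ?thesis using finBA fUA finGA d1 d2 by (simp add: card_Un_disjoint)
    qed
    ultimately show ?thesis by simp
  qed
  have cB: "card B = card VM + card (BBd - VM) + card UsedB + card (GB0 - UsedB)"
  proof -
    have "B = VM \<union> (BBd - VM) \<union> UsedB \<union> (GB0 - UsedB)" using UB VMB unfolding GB0_def BBd_def by auto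
    moreover have "card (VM \<union> (BBd - VM) \<union> UsedB \<union> (GB0 - UsedB)) = card VM + card (BBd - VM) + card UsedB + card (GB0 - UsedB)"
    proof -
      have d1: "(VM \<union> (BBd - VM) \<union> UsedB) \<inter> (GB0 - UsedB) = {}" using UB unfolding GB0_def by auto
      have d2: "(VM \<union> (BBd - VM)) \<inter> UsedB = {}" using UB unfolding GB0_def by auto
      have d3: "VM \<inter> (BBd - VM) = {}" by auto
      have c3: "card (VM \<union> BBd) = card VM + card (BBd - VM)"
        using card_Un_disjoint[OF finVM _ d3] finBBd by simp
      show ?thesis using finVM finBBd fUB finGB0 d1 d2 d3 c3 by (simp add: card_Un_disjoint)
    qed
    ultimately show ?thesis by simp
  qed
  define uX where "uX e = [fA e] @ sl e @ [gA e]" for e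
  define uY where "uY a = [fB a, a, gB a]" for a
  obtain lIA where lIA: "set lIA = IA" "distinct lIA" using finite_distinct_list[OF finIA] by blast
  define lGA where "lGA = sorted_list_of_set (GA - UsedA)"
  define lBA where "lBA = sorted_list_of_set BA"
  define lGB where "lGB = sorted_list_of_set (GB0 - UsedB)"
  define LX where "LX = map uX lIA @ map (\<lambda>a. [a]) lGA"
  define LY where "LY = map uY lBA @ map (\<lambda>b. [b]) lGB"
  have lLX: "length LX = card IA + card (GA - UsedA)"
    unfolding LX_def lGA_def using lIA by (metis distinct_card length_map length_append length_sorted_list_of_set)
  have lLY: "length LY = card BA + card (GB0 - UsedB)"
    unfolding LY_def lBA_def lGB_def by simp
  have eqlen: "length LX = length LY"
    using lLX lLY cA cB cIA cUA cUB cVM cMB by linarith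
  define N where "N = length LY"
  define us0 where "us0 = ilv LX LY"
  have lus0: "length us0 = 2 * N" unfolding us0_def N_def using ilv_length[OF eqlen] eqlen by simp
  have fAe: "fA e \<in> GA" "gA e \<in> GA" "E (hd (sl e)) (fA e)" "E (last (sl e)) (gA e)" "fA e \<noteq> gA e" if eI: "e \<in> IA" for e
    using fgA eI unfolding SA_def TA_def by auto
  have fBa: "fB a \<in> GB0" "gB a \<in> GB0" "E a (fB a)" "E a (gB a)" "fB a \<noteq> gB a" if aI: "a \<in> BA" for a
    using fgB aI unfolding SB_def by auto
  have GAA: "GA \<subseteq> A" and GB0B: "GB0 \<subseteq> B" and BAA: "BA \<subseteq> A" and BBdB: "BBd \<subseteq> B"
    unfolding GA_def GB0_def BA_def BBd_def by auto
  define P1 where "P1 = concat (map uX lIA)"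
  define P2 where "P2 = concat (map (\<lambda>a. [a]) lGA)"
  define P3 where "P3 = concat (map uY lBA)"
  define P4 where "P4 = concat (map (\<lambda>b. [b]) lGB)"
  have sP1: "set P1 = UsedA \<union> VM \<union> (BBd - VM)"
  proof -
    have "set P1 = (\<Union>e\<in>IA. insert (fA e) (insert (gA e) e))"
      unfolding P1_def uX_def using lIA slp by auto
    also have "\<dots> = UsedA \<union> \<Union>IA" unfolding UsedA_def by auto
    finally show ?thesis using UIA by auto
  qed
  have sP2: "set P2 = GA - UsedA" unfolding P2_def lGA_def using finGA by auto
  have sP3: "set P3 = UsedB \<union> BA" unfolding P3_def lBA_def uY_def UsedB_def using finBA by auto
  have sP4: "set P4 = GB0 - UsedB" unfolding P4_def lGB_def using finGB0 by auto
  have dP1: "distinct P1" unfolding P1_def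
  proof (rule dist_concat_map)
    show "distinct lIA" using lIA by simp
    show "\<forall>x\<in>set lIA. distinct (uX x)"
    proof
      fix e assume "e \<in> set lIA"
      then have e: "e \<in> IA" using lIA by simp
      have "fA e \<notin> e" "gA e \<notin> e" using fAe[OF e] GAA IAB e ABd by auto
      then show "distinct (uX e)" unfolding uX_def using slp[OF e] fAe[OF e] by auto
    qed
    show "\<forall>x\<in>set lIA. \<forall>y\<in>set lIA. x \<noteq> y \<longrightarrow> set (uX x) \<inter> set (uX y) = {}"
    proof (intro ballI impI)
      fix e e' assume "e \<in> set lIA" "e' \<in> set lIA" "e \<noteq> e'"
      then have e: "e \<in> IA" "e' \<in> IA" "e \<noteq> e'" using lIA by auto
      have "e \<inter> e' = {}" using IAdisj e by blast
      moreover have "fA e \<noteq> fA e'" "fA e \<noteq> gA e'" "gA e \<noteq> fA e'" "gA e \<noteq> gA e'"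
      proof -
        have h1: "\<forall>j\<in>IA. fA e \<noteq> gA j \<and> (e \<noteq> j \<longrightarrow> fA e \<noteq> fA j \<and> gA e \<noteq> gA j)" using fgA e(1) by simp
        have h2: "\<forall>j\<in>IA. fA e' \<noteq> gA j \<and> (e' \<noteq> j \<longrightarrow> fA e' \<noteq> fA j \<and> gA e' \<noteq> gA j)" using fgA e(2) by simp
        show "fA e \<noteq> fA e'" "fA e \<noteq> gA e'" "gA e \<noteq> fA e'" "gA e \<noteq> gA e'" using h1 h2 e by auto
      qed
      moreover have "fA e \<notin> e'" "gA e \<notin> e'" "fA e' \<notin> e" "gA e' \<notin> e"
        using fAe[OF e(1)] fAe[OF e(2)] GAA IAB e ABd by auto
      ultimately show "set (uX e) \<inter> set (uX e') = {}" unfolding uX_def using slp e by auto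
    qed
  qed
  have dP2: "distinct P2" unfolding P2_def lGA_def by (simp add: distinct_map)
  have dP3: "distinct P3" unfolding P3_def
  proof (rule dist_concat_map)
    show "distinct lBA" unfolding lBA_def by simp
    show "\<forall>x\<in>set lBA. distinct (uY x)"
    proof
      fix a assume "a \<in> set lBA"
      then have a: "a \<in> BA" unfolding lBA_def using finBA by simp
      have "fB a \<in> B" "gB a \<in> B" "a \<in> A" using fBa[OF a] GB0B BAA a by auto
      then have "fB a \<noteq> a" "gB a \<noteq> a" using ABd by auto
      then show "distinct (uY a)" unfolding uY_def using fBa[OF a] by auto
    qed
    show "\<forall>x\<in>set lBA. \<forall>y\<in>set lBA. x \<noteq> y \<longrightarrow> set (uY x) \<inter> set (uY y) = {}"
    proof (intro ballI impI)
      fix a a' assume "a \<in> set lBA" "a' \<in> set lBA" "a \<noteq> a'"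
      then have a: "a \<in> BA" "a' \<in> BA" "a \<noteq> a'" unfolding lBA_def using finBA by auto
      have "fB a \<noteq> fB a'" "fB a \<noteq> gB a'" "gB a \<noteq> fB a'" "gB a \<noteq> gB a'"
      proof -
        have h1: "\<forall>j\<in>BA. fB a \<noteq> gB j \<and> (a \<noteq> j \<longrightarrow> fB a \<noteq> fB j \<and> gB a \<noteq> gB j)" using fgB a(1) by simp
        have h2: "\<forall>j\<in>BA. fB a' \<noteq> gB j \<and> (a' \<noteq> j \<longrightarrow> fB a' \<noteq> fB j \<and> gB a' \<noteq> gB j)" using fgB a(2) by simp
        show "fB a \<noteq> fB a'" "fB a \<noteq> gB a'" "gB a \<noteq> fB a'" "gB a \<noteq> gB a'" using h1 h2 a by auto
      qed
      moreover have "fB a \<noteq> a'" "gB a \<noteq> a'" "fB a' \<noteq> a" "gB a' \<noteq> a"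
        using fBa[OF a(1)] fBa[OF a(2)] GB0B BAA a ABd by auto
      ultimately show "set (uY a) \<inter> set (uY a') = {}" unfolding uY_def using a by auto
    qed
  qed
  have dP4: "distinct P4" unfolding P4_def lGB_def by (simp add: distinct_map)
  have cLX: "concat LX = P1 @ P2" unfolding LX_def P1_def P2_def by simp
  have cLY: "concat LY = P3 @ P4" unfolding LY_def P3_def P4_def by simp
  have BAGA: "BA \<inter> GA = {}" unfolding GA_def by auto
  have GB0d: "GB0 \<inter> (BBd \<union> VM) = {}" unfolding GB0_def by auto
  have UAA: "UsedA \<subseteq> A" and UBB: "UsedB \<subseteq> B" using UA UB GAA GB0B by auto
  have i12: "set P1 \<inter> set P2 = {}" unfolding sP1 sP2 using GAA VMB BBdB ABd by blast
  have i13: "set P1 \<inter> set P3 = {}" unfolding sP1 sP3 using UAA UBB BAA VMB BBdB ABd UA BAGA GB0d UB by blast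
  have i14: "set P1 \<inter> set P4 = {}" unfolding sP1 sP4 using UAA GB0B VMB BBdB ABd GB0d by blast
  have i23: "set P2 \<inter> set P3 = {}" unfolding sP2 sP3 using GAA UBB BAGA ABd by blast
  have i24: "set P2 \<inter> set P4 = {}" unfolding sP2 sP4 using GAA GB0B ABd by blast
  have i34: "set P3 \<inter> set P4 = {}" unfolding sP3 sP4 using BAA GB0B ABd by blast
  have dall: "distinct (concat LX @ concat LY)"
    unfolding cLX cLY using dP1 dP2 dP3 dP4 i12 i13 i14 i23 i24 i34
    by (simp add: distinct_append Int_Un_distrib Int_Un_distrib2 Int_commute)
  have sall: "set (concat LX) \<union> set (concat LY) = V"
  proof -
    have "set (concat LX) \<union> set (concat LY) = UsedA \<union> VM \<union> (BBd - VM) \<union> (GA - UsedA) \<union> (UsedB \<union> BA) \<union> (GB0 - UsedB)"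
      unfolding cLX cLY using sP1 sP2 sP3 sP4 by auto
    also have "\<dots> = A \<union> B" using UA UB BBdB VMB unfolding GA_def GB0_def BA_def by auto
    finally show ?thesis using AB by simp
  qed
  have dus0: "distinct (concat us0)" unfolding us0_def using ilv_distinct[OF eqlen dall] .
  have sus0: "set (concat us0) = V" unfolding us0_def using ilv_concat_set[OF eqlen] sall by simp
  have setus0: "set us0 = set LX \<union> set LY" unfolding us0_def using ilv_set[OF eqlen] .
  have endsX: "hd U \<in> GA \<and> last U \<in> GA" if UX: "U \<in> set LX" for U
    using UX fAe lIA unfolding LX_def uX_def lGA_def using finGA slp by auto
  have endsY: "hd U \<in> GB0 \<and> last U \<in> GB0" if UY: "U \<in> set LY" for U
    using UY fBa unfolding LY_def uY_def lBA_def lGB_def using finBA finGB0 by auto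
  have alt0: "alt GA GB0 us0" unfolding alt_def
  proof (intro allI impI)
    fix i assume i: "i < length us0"
    then have i2: "i < 2 * length LX" using lus0 eqlen N_def by simp
    show "hd (us0!i) \<in> (if even i then GA else GB0) \<and> last (us0!i) \<in> (if even i then GA else GB0)"
    proof (cases "even i")
      case True
      then have "us0!i = LX!(i div 2)" "i div 2 < length LX" using ilv_nth[OF eqlen i2] i2 unfolding us0_def by auto
      then show ?thesis using endsX True by (metis nth_mem)
    next
      case False
      then have "us0!i = LY!(i div 2)" "i div 2 < length LY" using ilv_nth[OF eqlen i2] i2 eqlen unfolding us0_def by auto
      then show ?thesis using endsY False by (metis nth_mem)
    qed
  qed
  have ne0: "\<forall>U\<in>set us0. U \<noteq> []" unfolding setus0 LX_def LY_def uX_def uY_def by auto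
  have sX: "successively E (uX e)" if eI: "e \<in> IA" for e
  proof -
    have a: "successively E (sl e @ [gA e])" using slp[OF eI] fAe[OF eI] by (simp add: successively_append_iff)
    have b: "E (fA e) (hd (sl e @ [gA e]))" using slp[OF eI] fAe[OF eI] sym by simp
    show ?thesis unfolding uX_def using a b by (simp add: successively_Cons)
  qed
  have sY: "successively E (uY a)" if aI: "a \<in> BA" for a
    using fBa[OF aI] sym unfolding uY_def by auto
  have succ0: "successively E U" if Uin: "U \<in> set us0" for U
    using Uin sX sY unfolding setus0 LX_def LY_def lBA_def using lIA finBA by auto
  define D where "D = (\<eta> + \<alpha>) * real n"
  have rB: "2 * real (card B) \<le> real n + \<alpha> * real n" using nAB dAB by linarith
  have rA: "2 * real (card A) \<le> real n" using nAB cAB by linarith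
  have degX: "\<forall>x\<in>GA. real (card {y\<in>GB0. \<not> E x y}) \<le> D"
  proof
    fix x assume x: "x \<in> GA"
    have "{y\<in>GB0. \<not> E x y} \<subseteq> B - {y\<in>B. E x y}" unfolding GB0_def by auto
    then have "card {y\<in>GB0. \<not> E x y} \<le> card (B - {y\<in>B. E x y})" using finB by (intro card_mono) auto
    also have "\<dots> = card B - card {y\<in>B. E x y}" using finB by (intro card_Diff_subset) auto
    finally have "real (card {y\<in>GB0. \<not> E x y}) \<le> real (card B - card {y\<in>B. E x y})" by (simp only: of_nat_le_iff)
    moreover have "card {y\<in>B. E x y} \<le> card B" using finB by (intro card_mono) auto
    ultimately have "real (card {y\<in>GB0. \<not> E x y}) \<le> real (card B) - real (card {y\<in>B. E x y})" by (simp add: of_nat_diff)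
    moreover have "real (card {y\<in>B. E x y}) \<ge> (1/2 - \<eta>) * real n" using x unfolding GA_def BA_def deg_in_def by auto
    moreover have "\<alpha> * real n \<ge> 0" using al rn0 by simp
    ultimately show "real (card {y\<in>GB0. \<not> E x y}) \<le> D" using rB unfolding D_def by (simp add: algebra_simps)
  qed
  have degY: "\<forall>y\<in>GB0. real (card {x\<in>GA. \<not> E y x}) \<le> D"
  proof
    fix y assume y: "y \<in> GB0"
    have "{x\<in>GA. \<not> E y x} \<subseteq> A - {x\<in>A. E y x}" unfolding GA_def by auto
    then have "card {x\<in>GA. \<not> E y x} \<le> card (A - {x\<in>A. E y x})" using finA by (intro card_mono) auto
    also have "\<dots> = card A - card {x\<in>A. E y x}" using finA by (intro card_Diff_subset) auto
    finally have "real (card {x\<in>GA. \<not> E y x}) \<le> real (card A - card {x\<in>A. E y x})" by (simp only: of_nat_le_iff)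
    moreover have "card {x\<in>A. E y x} \<le> card A" using finA by (intro card_mono) auto
    ultimately have "real (card {x\<in>GA. \<not> E y x}) \<le> real (card A) - real (card {x\<in>A. E y x})" by (simp add: of_nat_diff)
    moreover have "real (card {x\<in>A. E y x}) \<ge> (1/2 - \<eta>) * real n" using y unfolding GB0_def BBd_def deg_in_def by auto
    moreover have "\<alpha> * real n \<ge> 0" using al rn0 by simp
    ultimately show "real (card {x\<in>GA. \<not> E y x}) \<le> D" using rA unfolding D_def by (simp add: algebra_simps)
  qed
  have ND: "real N > 2 * D"
  proof -
    have "card B \<le> card (B - (BBd \<union> VM)) + card (BBd \<union> VM)" using finB finBBd finVM by (intro card_le_diff) auto
    moreover have "B - (BBd \<union> VM) = GB0" unfolding GB0_def by auto
    moreover have "card (BBd \<union> VM) \<le> card BBd + card VM" by (rule card_Un_le)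
    moreover have "card (GB0 - UsedB) = card GB0 - card UsedB" using UB fUB by (intro card_Diff_subset)
    moreover have "card UsedB \<le> card GB0" using UB finGB0 by (intro card_mono)
    ultimately have "real N \<ge> real (card B) - real (card BBd) - real (card VM) - real (card BA)"
      unfolding N_def using lLY cUB by simp
    then have "real N \<ge> real (card B) - 4 * \<alpha> * real n" using cBBd cVM rcM cBA by simp
    moreover have "2 * real (card B) \<ge> real n" using nAB cAB by linarith
    moreover have "(1/2 - 6 * \<alpha> - 2 * \<eta>) * real n > 0" using eta al nu rn0 by (intro mult_pos_pos) auto
    ultimately show ?thesis unfolding D_def by (simp add: algebra_simps)
  qed
  have D0: "D \<ge> 0" unfolding D_def using eta al rn0 by simp
  have N0: "N > 0" using ND D0 by (metis gr0I of_nat_0 not_less mult_nonneg_nonneg zero_le_numeral)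
  obtain us where us: "length us = 2 * N" "set us \<subseteq> set us0 \<union> rev ` set us0" "distinct (concat us)"
    "set (concat us) = set (concat us0)" "bad E us = {}"
    using twoopt[OF sym lus0 N0 dus0 ne0 alt0 finGA finGB0 degX degY ND] by blast
  have unitsus: "\<forall>U\<in>set us. U \<noteq> [] \<and> successively E U"
  proof
    fix U assume "U \<in> set us"
    then have "U \<in> set us0 \<or> rev U \<in> set us0" using us(2) by auto
    then show "U \<noteq> [] \<and> successively E U"
    proof
      assume "U \<in> set us0" then show ?thesis using ne0 succ0 by auto
    next
      assume r: "rev U \<in> set us0"
      then have "successively E (rev (rev U))" using succ_rev[OF succ0[OF r] sym] by simp
      then show ?thesis using ne0 r by auto
    qed
  qed
  have sV: "set (concat us) = V" using us(4) sus0 by simp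
  have l3: "length (concat us) \<ge> 3" using us(3) sV nV by (metis distinct_card)
  have usne: "us \<noteq> []" using us(1) N0 by auto
  have ham: "hamilton_cycle V E (concat us)" by (rule ham_from_units[OF us(5) usne unitsus us(3) sV l3])
  have Mc: "M \<subseteq> cycle_edges (concat us)"
  proof
    fix e assume eM: "e \<in> M"
    then have eI: "e \<in> IA" unfolding IA_def by simp
    obtain x y where xy: "sl e = [x,y]" "e = {x,y}" using slM[OF eM] by blast
    have uXin: "uX e \<in> set us0" using eI lIA unfolding setus0 LX_def by auto
    have "fA e \<in> V" using fAe[OF eI] GAA AB by auto
    then obtain U where U: "U \<in> set us" "fA e \<in> set U" using sV by auto
    obtain W where W: "W \<in> set us0" "U = W \<or> U = rev W" using U(1) us(2) by auto
    have "fA e \<in> set W" using W(2) U(2) by auto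
    moreover have "fA e \<in> set (uX e)" unfolding uX_def by simp
    ultimately have "W = uX e" using dus0 W(1) uXin unfolding distinct_concat_iff by blast
    then have "U = [fA e] @ [x,y] @ [gA e] \<or> U = [gA e] @ [y,x] @ [fA e]"
      using W(2) xy unfolding uX_def by auto
    then show "e \<in> cycle_edges (concat us)"
      using unit_infix[OF U(1)] xy by (metis insert_commute)
  qed
  show ?thesis using ham Mc by blast
qed
theorem mainTheorem13:
  shows "\<exists>\<eta>0>0. \<forall>\<eta>. 0 < \<eta> \<and> \<eta> \<le> \<eta>0 \<longrightarrow>
     (\<exists>\<nu>0>0. \<forall>\<nu>. 0 < \<nu> \<and> \<nu> \<le> \<nu>0 \<longrightarrow>
       (\<exists>\<alpha>0>0. \<forall>\<alpha>. 0 < \<alpha> \<and> \<alpha> \<le> \<alpha>0 \<longrightarrow>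
         (\<exists>n0::nat. \<forall>(V::nat set) E A B M.
            simple_graph V E \<longrightarrow> card V \<ge> n0 \<longrightarrow>
            superextremal_biclique \<alpha> \<eta> \<nu> V E A B \<longrightarrow>
            matching_in E B M \<longrightarrow> card M = card B - card A \<longrightarrow>
            (\<exists>vs. hamilton_cycle V E vs \<and> M \<subseteq> cycle_edges vs))))"
  apply (rule exI[of _ "1/100::real"])
  apply (rule conjI, simp)
  apply (intro allI impI)
  apply (rule exI[of _ "1/100::real"])
  apply (rule conjI, simp)
  apply (intro allI impI)
  subgoal for \<eta> \<nu>
    apply (rule exI[of _ "\<nu>/10"])
    apply (rule conjI, simp)
    apply (intro allI impI)
    apply (rule exI[of _ "3::nat"])
    apply (intro allI impI)
    apply (rule main)
                apply auto
    done
  done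

end
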